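(* Let $S,T\subseteq\mathbb{Z}_{>0}$ be finite and $x\in T\setminus(T\triangleleft S)$. Then $(T\setminus\{x\})\triangleleft S=T\triangleleft S$.
   Context: For finite $S,T\subseteq\mathbb{Z}_{>0}$, $T\triangleleft S$ is computed by going through the elements of $S$ from largest to smallest; each $s$ picks the largest element of $T$ that is less than $s$ and not yet picked (if one exists); $T\triangleleft S$ is the set of picked elements. *)

theory Defs
  imports Main
begin

text \<open>Process the elements of S (given as a list, largest first); the second argument is
the set of not-yet-picked elements of T.\<close>
fun pick_run :: "nat list \<Rightarrow> nat set \<Rightarrow> nat set" where
  "pick_run [] A = {}"
| "pick_run (s # ss) A =
     (if \<exists>t\<in>A. t < s
      then (let t = Max {t\<in>A. t < s} in insert t (pick_run ss (A - {t})))
      else pick_run ss A)"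

definition tri :: "nat set \<Rightarrow> nat set \<Rightarrow> nat set" (infixl "\<triangleleft>" 65) where
  "T \<triangleleft> S = pick_run (rev (sorted_list_of_set S)) T"

end

theory Submission
  imports Defs
begin

lemma pick_run_remove:
  "finite A \<Longrightarrow> x \<in> A \<Longrightarrow> x \<notin> pick_run ss A \<Longrightarrow> pick_run ss (A - {x}) = pick_run ss A"
proof (induction ss arbitrary: A)
  case Nil
  then show ?case by simp
next
  case (Cons s ss)
  show ?case
  proof (cases "\<exists>t\<in>A. t < s")
    case True
    define t where "t = Max {t\<in>A. t < s}"
    have fin: "finite {t\<in>A. t < s}" using Cons.prems by simp
    have ne: "{t\<in>A. t < s} \<noteq> {}" using True by auto
    have "t \<in> {t\<in>A. t < s}" unfolding t_def using Max_in[OF fin ne] .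
    then have tin: "t \<in> A" "t < s" by auto
    have P: "pick_run (s # ss) A = insert t (pick_run ss (A - {t}))"
      using True by (simp add: t_def Let_def)
    have xt: "x \<noteq> t" using Cons.prems(3) P by auto
    have ex2: "\<exists>t\<in>A - {x}. t < s" using tin xt by auto
    have M: "Max {u\<in>A - {x}. u < s} = t"
    proof (rule antisym)
      show "Max {u\<in>A - {x}. u < s} \<le> t"
        unfolding t_def using fin ex2 by (intro Max_mono) auto
      show "t \<le> Max {u\<in>A - {x}. u < s}"
        using fin tin xt by (intro Max_ge) auto
    qed
    have P2: "pick_run (s # ss) (A - {x}) = insert t (pick_run ss (A - {x} - {t}))"
      using ex2 M by (simp add: Let_def)
    have "A - {x} - {t} = (A - {t}) - {x}" by auto
    moreover have "pick_run ss ((A - {t}) - {x}) = pick_run ss (A - {t})"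
      using Cons.prems xt P by (intro Cons.IH) auto
    ultimately show ?thesis using P P2 by simp
  next
    case False
    then have F2: "\<not> (\<exists>t\<in>A - {x}. t < s)" by auto
    have "pick_run ss (A - {x}) = pick_run ss A"
      using Cons.prems False by (intro Cons.IH) auto
    then show ?thesis using False F2 by simp
  qed
qed

theorem lemma4p3:
  fixes S T :: "nat set" and x :: nat
  assumes "finite S" and "finite T"
    and "\<forall>s\<in>S. 0 < s" and "\<forall>t\<in>T. 0 < t"
    and "x \<in> T - (T \<triangleleft> S)"
  shows "(T - {x}) \<triangleleft> S = T \<triangleleft> S"
  using assms(2,5) pick_run_remove unfolding tri_def by blast

end
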